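(* Let $\mathcal{F}:\mathcal{H}_2\to\mathbb{R}$ be any function on the Siegel upper half-space $\mathcal{H}_2$ which is invariant under the action of $\mathrm{Sp}(4,\mathbb{Z})$ and which is $C^1$ in open neighborhoods of the points $$\mathbf{B}_1=\begin{pmatrix} \frac{i}{\sqrt{2}}-\frac{1}{2} & \frac{1}{2} \\ \frac{1}{2} & \frac{i}{\sqrt{2}}-\frac{1}{2}\end{pmatrix},\qquad \mathbf{B}_2=\frac{i}{\sqrt{3}}\begin{pmatrix} 2 & 1 \\ 1 & 2\end{pmatrix},\qquad \mathbf{B}_3=\begin{pmatrix} \epsilon_5 & \frac{\epsilon_5}{1+\epsilon_5} \\ \frac{\epsilon_5}{1+\epsilon_5} & 1-\epsilon_5^4\end{pmatrix},$$ where $\epsilon_5=e^{2\pi i/5}$; these are the matrices of $b$-periods (in suitable canonical bases of cycles) of the curves with large automorphism groups $y^2=x(x^4-1)$, $y^2=x^6-1$ and $y^2=x^5-1$ respectively. Then the gradient of $\mathcal{F}$ vanishes at the points $\mathbf{B}_1$, $\mathbf{B}_2$ and $\mathbf{B}_3$.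
   Context: $\mathcal{H}_2$ denotes the space of complex symmetric $2\times 2$ matrices $\mathbf{B}$ with positive definite imaginary part. A matrix $T=\begin{pmatrix}A&B'\\C&D\end{pmatrix}\in\mathrm{Sp}(4,\mathbb{Z})$ (with $2\times2$ blocks) acts on $\mathcal{H}_2$ by $\mathbf{B}\mapsto (A\mathbf{B}+B')(C\mathbf{B}+D)^{-1}$; invariance means $\mathcal{F}(T\cdot\mathbf{B})=\mathcal{F}(\mathbf{B})$ for all $T$ and $\mathbf{B}$. The gradient is taken with respect to the real coordinates given by the real and imaginary parts of the three independent entries $\mathbf{B}_{11},\mathbf{B}_{12},\mathbf{B}_{22}$. *)

theory Defs
  imports "HOL-Analysis.Analysis"
begin

definition mat2 :: "'a \<Rightarrow> 'a \<Rightarrow> 'a \<Rightarrow> 'a \<Rightarrow> 'a^2^2" where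
  "mat2 a b c d = (\<chi> i j. if i = 1 then (if j = 1 then a else b) else (if j = 1 then c else d))"

definition Im_mat :: "complex^2^2 \<Rightarrow> real^2^2" where
  "Im_mat M = (\<chi> i j. Im (M $ i $ j))"

definition siegel_H2 :: "(complex^2^2) set" where
  "siegel_H2 = {M. transpose M = M \<and>
     (\<forall>x::real^2. x \<noteq> 0 \<longrightarrow> x \<bullet> (Im_mat M *v x) > 0)}"

text \<open>Sp(4,Z), with elements given by their 2x2 blocks (A,B,C,D) of
  T = [[A,B],[C,D]]; the condition T^T J T = J with J = [[0,I],[-I,0]]
  written out block by block.\<close>
definition Sp4Z :: "((int^2^2) \<times> (int^2^2) \<times> (int^2^2) \<times> (int^2^2)) set" where
  "Sp4Z = {(A, B, C, D) | A B C D :: int^2^2.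
      transpose A ** C - transpose C ** A = 0 \<and>
      transpose A ** D - transpose C ** B = mat 1 \<and>
      transpose B ** C - transpose D ** A = - mat 1 \<and>
      transpose B ** D - transpose D ** B = 0}"

definition cmat_of_int :: "int^2^2 \<Rightarrow> complex^2^2" where
  "cmat_of_int M = (\<chi> i j. of_int (M $ i $ j))"

definition sp_act :: "(int^2^2) \<times> (int^2^2) \<times> (int^2^2) \<times> (int^2^2) \<Rightarrow> complex^2^2 \<Rightarrow> complex^2^2" where
  "sp_act T Z = (case T of (A, B, C, D) \<Rightarrow>
     (cmat_of_int A ** Z + cmat_of_int B) ** matrix_inv (cmat_of_int C ** Z + cmat_of_int D))"

text \<open>Coordinates: a symmetric matrix is determined by its entries (Z11, Z12, Z22);
  complex^3 is viewed as a real vector space (real and imaginary parts).\<close>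
definition sym_of :: "complex \<times> complex \<times> complex \<Rightarrow> complex^2^2" where
  "sym_of p = (case p of (a, b, c) \<Rightarrow> mat2 a b b c)"

definition eps5 :: complex where "eps5 = cis (2 * pi / 5)"

definition B1 :: "complex \<times> complex \<times> complex" where
  "B1 = (\<i> / sqrt 2 - 1/2, 1/2, \<i> / sqrt 2 - 1/2)"

definition B2 :: "complex \<times> complex \<times> complex" where
  "B2 = (\<i> / sqrt 3 * 2, \<i> / sqrt 3, \<i> / sqrt 3 * 2)"

definition B3 :: "complex \<times> complex \<times> complex" where
  "B3 = (eps5, eps5 / (1 + eps5), 1 - eps5 ^ 4)"

definition C1_near :: "(complex^2^2 \<Rightarrow> real) \<Rightarrow> complex \<times> complex \<times> complex \<Rightarrow> bool" where
  "C1_near F p = (\<exists>U G'. open U \<and> p \<in> U \<and> sym_of ` U \<subseteq> siegel_H2 \<and>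
       (\<forall>x\<in>U. ((F \<circ> sym_of) has_derivative blinfun_apply (G' x)) (at x)) \<and>
       continuous_on U (G' :: complex \<times> complex \<times> complex \<Rightarrow> (complex \<times> complex \<times> complex) \<Rightarrow>\<^sub>L real))"

end

theory Submission
  imports Defs
begin

lemma mat2_eq_iff: "mat2 a b c d = mat2 a' b' c' d' \<longleftrightarrow> a = a' \<and> b = b' \<and> c = c' \<and> d = d'"
  unfolding mat2_def vec_eq_iff forall_2 by auto

lemma mat2_nth: "mat2 a b c d $ 1 $ 1 = a" "mat2 a b c d $ 1 $ 2 = b"
   "mat2 a b c d $ 2 $ 1 = c" "mat2 a b c d $ 2 $ 2 = d"
  unfolding mat2_def by auto

lemma mat2_mult: "mat2 a b c d ** mat2 e f g h =
   mat2 (a*e+b*g) (a*f+b*h) (c*e+d*g) (c*f+d*h)"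
  unfolding vec_eq_iff forall_2 matrix_matrix_mult_def sum_2 by (auto simp: mat2_nth)

lemma mat2_add: "mat2 a b c d + mat2 e f g h = mat2 (a+e) (b+f) (c+g) (d+h)"
  unfolding vec_eq_iff forall_2 by (auto simp: mat2_nth)

lemma mat2_minus: "mat2 a b c d - mat2 e f g h = mat2 (a-e) (b-f) (c-g) (d-h)"
  unfolding vec_eq_iff forall_2 by (auto simp: mat2_nth)

lemma mat2_uminus: "- mat2 a b c d = mat2 (-a) (-b) (-c) (-d)"
  unfolding vec_eq_iff forall_2 by (auto simp: mat2_nth)

lemma mat2_transpose: "transpose (mat2 a b c d) = mat2 a c b d"
  unfolding vec_eq_iff forall_2 transpose_def by (auto simp: mat2_nth)

lemma mat2_one: "mat 1 = mat2 1 0 0 1"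
  unfolding vec_eq_iff forall_2 mat_def by (auto simp: mat2_nth)

lemma mat2_zero: "0 = mat2 0 0 0 0"
  unfolding vec_eq_iff forall_2 by (auto simp: mat2_nth)

lemma cmat_mat2: "cmat_of_int (mat2 a b c d) = mat2 (of_int a) (of_int b) (of_int c) (of_int d)"
  unfolding vec_eq_iff forall_2 cmat_of_int_def by (auto simp: mat2_nth)

lemma matrix_inv_eqI:
  fixes M N :: "'a::comm_ring_1^'n^'n"
  assumes "M ** N = mat 1" "N ** M = mat 1"
  shows "matrix_inv M = N"
proof -
  have ex: "\<exists>N'. M ** N' = mat 1 \<and> N' ** M = mat 1" using assms by blast
  have "M ** matrix_inv M = mat 1 \<and> matrix_inv M ** M = mat 1"
    unfolding matrix_inv_def using someI_ex[OF ex] by simp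
  then have "matrix_inv M = (N ** M) ** matrix_inv M" using assms by (simp add: matrix_mul_lid)
  also have "\<dots> = N" using \<open>M ** matrix_inv M = mat 1 \<and> _\<close>
    by (simp add: matrix_mul_assoc[symmetric] matrix_mul_rid)
  finally show ?thesis .
qed

lemma matrix_inv_mat2:
  fixes a b c d :: complex
  assumes "a*d - b*c \<noteq> 0"
  shows "matrix_inv (mat2 a b c d) =
    mat2 (d/(a*d-b*c)) (-b/(a*d-b*c)) (-c/(a*d-b*c)) (a/(a*d-b*c))"
proof (rule matrix_inv_eqI)
  show "mat2 a b c d ** mat2 (d/(a*d-b*c)) (-b/(a*d-b*c)) (-c/(a*d-b*c)) (a/(a*d-b*c)) = mat 1"
    using assms unfolding mat2_mult mat2_one mat2_eq_iff by (simp add: divide_simps; simp add: algebra_simps)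
  show "mat2 (d/(a*d-b*c)) (-b/(a*d-b*c)) (-c/(a*d-b*c)) (a/(a*d-b*c)) ** mat2 a b c d = mat 1"
    using assms unfolding mat2_mult mat2_one mat2_eq_iff by (simp add: divide_simps; simp add: algebra_simps)
qed

lemma matrix_inv_mat2':
  fixes a b c d D :: complex
  assumes "a*d - b*c = D" "D \<noteq> 0"
  shows "matrix_inv (mat2 a b c d) = mat2 (d/D) (-b/D) (-c/D) (a/D)"
  using matrix_inv_mat2[of a d b c] assms by simp

lemma key:
  fixes F :: "complex^2^2 \<Rightarrow> real" and \<phi> :: "complex \<times> complex \<times> complex \<Rightarrow> _"
  assumes inv: "\<And>T Z. T \<in> Sp4Z \<Longrightarrow> Z \<in> siegel_H2 \<Longrightarrow> F (sp_act T Z) = F Z"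
    and c1: "C1_near F p" and T: "T \<in> Sp4Z" and V: "open V" "p \<in> V"
    and act: "\<And>z. z \<in> V \<Longrightarrow> sp_act T (sym_of z) = sym_of (\<phi> z)"
    and fixp: "\<phi> p = p"
    and der: "(\<phi> has_derivative K) (at p)"
    and surj: "\<And>v. \<exists>w. K w - w = v"
  shows "((F \<circ> sym_of) has_derivative (\<lambda>_. 0)) (at p)"
proof -
  obtain U G' where U: "open U" "p \<in> U" "sym_of ` U \<subseteq> siegel_H2"
    and G: "\<And>x. x\<in>U \<Longrightarrow> ((F \<circ> sym_of) has_derivative blinfun_apply (G' x)) (at x)"
    using c1 unfolding C1_near_def by blast
  let ?f = "F \<circ> sym_of"
  have fp: "(?f has_derivative blinfun_apply (G' p)) (at p)" using G U by blast
  have "((?f \<circ> \<phi>) has_derivative (blinfun_apply (G' p) \<circ> K)) (at p)"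
    using diff_chain_at[OF der] fp fixp by simp
  moreover have "\<And>z. z \<in> U \<inter> V \<Longrightarrow> (?f \<circ> \<phi>) z = ?f z"
  proof -
    fix z assume z: "z \<in> U \<inter> V"
    have "sym_of z \<in> siegel_H2" using U z by blast
    then show "(?f \<circ> \<phi>) z = ?f z" using inv[OF T] act z by (metis IntD2 comp_apply)
  qed
  ultimately have "(?f has_derivative (blinfun_apply (G' p) \<circ> K)) (at p)"
    using U V by (intro has_derivative_transform_within_open[of "?f \<circ> \<phi>" _ p UNIV "U \<inter> V" ?f]) auto
  then have eq: "blinfun_apply (G' p) \<circ> K = blinfun_apply (G' p)"
    using has_derivative_unique fp by blast
  have "blinfun_apply (G' p) = (\<lambda>_. 0)"
  proof
    fix v
    obtain w where w: "K w - w = v" using surj by blast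
    have "blinfun_apply (G' p) v = G' p (K w) - G' p w"
      using w by (metis blinfun.diff_right)
    also have "\<dots> = 0" using fun_cong[OF eq, of w] by simp
    finally show "blinfun_apply (G' p) v = 0" .
  qed
  then show ?thesis using fp by simp
qed





definition D2 :: "complex \<times> complex \<times> complex \<Rightarrow> complex" where
  "D2 z = fst z * snd (snd z) - fst (snd z) * fst (snd z)"
definition phi2 :: "complex \<times> complex \<times> complex \<Rightarrow> complex \<times> complex \<times> complex" where
  "phi2 z = ((2*fst (snd z) - fst z - snd (snd z)) / D2 z, (fst (snd z) - fst z) / D2 z, - fst z / D2 z)"

definition T2 :: "(int^2^2) \<times> (int^2^2) \<times> (int^2^2) \<times> (int^2^2)" where
  "T2 = (mat2 0 0 0 0, mat2 (-1) (-1) 0 (-1), mat2 1 0 (-1) 1, mat2 0 0 0 0)"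

lemma T2_Sp: "T2 \<in> Sp4Z"
  unfolding T2_def Sp4Z_def
  by (simp add: mat2_transpose mat2_mult mat2_minus mat2_one mat2_uminus mat2_zero mat2_eq_iff)

lemma T2_act: assumes "D2 z \<noteq> 0" shows "sp_act T2 (sym_of z) = sym_of (phi2 z)"
proof -
  obtain z1 z2 z3 where z: "z = (z1, z2, z3)" by (cases z) auto
  define D where "D = D2 z"
  have d: "D \<noteq> 0" using assms D_def by simp
  have M: "cmat_of_int (mat2 1 0 (-1) 1) ** sym_of z + cmat_of_int (mat2 0 0 0 0) = mat2 z1 z2 (z2 - z1) (z3 - z2)"
    by (simp add: z sym_of_def cmat_mat2 mat2_mult mat2_add mat2_eq_iff)
  have d': "z1 * (z3 - z2) - z2 * (z2 - z1) = D" unfolding D_def D2_def z by (simp add: algebra_simps)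
  show ?thesis
    unfolding sp_act_def T2_def prod.case M matrix_inv_mat2'[OF d' d] phi2_def D_def[symmetric]
    using d apply (simp add: z sym_of_def cmat_mat2 mat2_mult mat2_add mat2_eq_iff)
    by (simp add: diff_divide_distrib add_divide_distrib)
qed

lemma V2_open: "open {z. D2 z \<noteq> 0}"
  using open_Collect_neq[of "D2" "\<lambda>_. 0"] unfolding D2_def
  by (simp add: continuous_intros)

definition K2 :: "complex \<times> complex \<times> complex \<Rightarrow> complex \<times> complex \<times> complex" where
  "K2 h = (let h1 = fst h; h2 = fst (snd h); h3 = snd (snd h) in
     (-1/3*h1 - 2/3*h2 - 1/3*h3, 1/3*h1 - 1/3*h2 - 2/3*h3, -1/3*h1 + 4/3*h2 - 4/3*h3))"

lemma t3: "(\<i> / complex_of_real (sqrt 3)) * (\<i> / complex_of_real (sqrt 3)) = -1/3"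
proof -
  have s: "complex_of_real (sqrt 3) * complex_of_real (sqrt 3) = 3"
    by (simp add: of_real_mult[symmetric] del: of_real_mult)
  have "(\<i> / complex_of_real (sqrt 3)) * (\<i> / complex_of_real (sqrt 3)) = (\<i> * \<i>) / (complex_of_real (sqrt 3) * complex_of_real (sqrt 3))"
    by (simp only: times_divide_times_eq)
  also have "\<dots> = -1/3" unfolding s by simp
  finally show ?thesis .
qed

lemma phi2_der_gen: fixes p assumes "D2 p \<noteq> 0"
  shows "(phi2 has_derivative (\<lambda>h. 
     (- (2 * fst (snd p) - fst p - snd (snd p)) *
           (inverse (D2 p) * (fst p * snd (snd h) + fst h * snd (snd p) -
             (fst (snd p) * fst (snd h) + fst (snd h) * fst (snd p))) * inverse (D2 p)) +
           (2 * fst (snd h) - fst h - snd (snd h)) / D2 p,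
      - (fst (snd p) - fst p) *
           (inverse (D2 p) * (fst p * snd (snd h) + fst h * snd (snd p) -
             (fst (snd p) * fst (snd h) + fst (snd h) * fst (snd p))) * inverse (D2 p)) +
           (fst (snd h) - fst h) / D2 p,
      - (- fst p) *
           (inverse (D2 p) * (fst p * snd (snd h) + fst h * snd (snd p) -
             (fst (snd p) * fst (snd h) + fst (snd h) * fst (snd p))) * inverse (D2 p)) +
           (- fst h) / D2 p))) (at p)"
proof -
  have a: "fst p * snd (snd p) \<noteq> fst (snd p) * fst (snd p)" using assms by (simp add: D2_def)
  show ?thesis
  unfolding phi2_def D2_def
  apply (rule has_derivative_eq_rhs)
   apply (rule derivative_intros | simp add: a)+
  done
qed

lemma K2_alg: fixes t a b c :: complex assumes "t * t = -1/3"
  shows "t * 2 * (t * 2 * c + a * (t * 2) - 2 * (t * b)) + (c - (2 * b - a)) = - (a / 3) - 2 * b / 3 - c / 3 \<and>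
     t * (t * 2 * c + a * (t * 2) - 2 * (t * b)) + (a - b) = a / 3 - b / 3 - 2 * c / 3 \<and>
     t * 2 * (t * 2 * c + a * (t * 2) - 2 * (t * b)) + a = 4 * b / 3 - a / 3 - 4 * c / 3"
  using assms by (intro conjI; algebra)

lemma phi2_der: "(phi2 has_derivative K2) (at B2)"
proof -
  define t where "t = \<i> / complex_of_real (sqrt 3)"
  have tt: "t * t = -1/3" using t3 t_def by simp
  have B: "B2 = (t*2, t, t*2)" unfolding B2_def t_def by simp
  have D: "D2 B2 = -1"
    unfolding B D2_def using tt by simp
  show ?thesis
    apply (rule has_derivative_eq_rhs[OF phi2_der_gen])
     apply (simp add: D)
    unfolding D
    apply (rule ext)
    unfolding K2_def Let_def B
    apply (simp add: prod_eq_iff)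
    by (rule K2_alg[OF tt])
qed

lemma K2_surj: fixes v :: "complex \<times> complex \<times> complex" shows "\<exists>w. K2 w - w = v"
proof -
  obtain v1 v2 v3 :: complex where v: "v = (v1, v2, v3)" by (cases v) auto
  define w :: "complex \<times> complex \<times> complex" where
    "w = (-2/3 * v1 + 1/3 * v2, -1/6 * v1 - 1/2 * v2 + 1/6 * v3, -1/3 * v2 - 1/3 * v3)"
  have "K2 w - w = v" unfolding v w_def K2_def Let_def apply (simp add: prod_eq_iff) by (simp add: field_simps)
  then show ?thesis by blast
qed

lemma D2_B2: "D2 B2 = -1"
proof -
  define t where "t = \<i> / complex_of_real (sqrt 3)"
  have tt: "t * t = -1/3" using t3 t_def by simp
  have B: "B2 = (t*2, t, t*2)" unfolding B2_def t_def by simp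
  show ?thesis
    unfolding B D2_def using tt by simp
qed

lemma phi2_fix: "phi2 B2 = B2"
proof -
  define t where "t = \<i> / complex_of_real (sqrt 3)"
  have tt: "t * t = -1/3" using t3 t_def by simp
  have B: "B2 = (t*2, t, t*2)" unfolding B2_def t_def by simp
  have D: "D2 B2 = -1"
    unfolding B D2_def using tt by simp
  show ?thesis unfolding phi2_def D unfolding B by simp
qed

lemma result2:
  fixes F :: "complex^2^2 \<Rightarrow> real"
  assumes inv: "\<And>T Z. T \<in> Sp4Z \<Longrightarrow> Z \<in> siegel_H2 \<Longrightarrow> F (sp_act T Z) = F Z"
    and c1: "C1_near F B2"
  shows "((F \<circ> sym_of) has_derivative (\<lambda>_. 0)) (at B2)"
proof (rule key[OF inv c1 T2_Sp V2_open, where \<phi>=phi2 and K=K2])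
  show "B2 \<in> {z. D2 z \<noteq> 0}" using D2_B2 by simp
  show "\<And>z. z \<in> {z. D2 z \<noteq> 0} \<Longrightarrow> sp_act T2 (sym_of z) = sym_of (phi2 z)" using T2_act by simp
  show "phi2 B2 = B2" by (rule phi2_fix)
  show "(phi2 has_derivative K2) (at B2)" by (rule phi2_der)
  show "\<And>v. \<exists>w. K2 w - w = v" by (rule K2_surj)
qed



definition D1 :: "complex \<times> complex \<times> complex \<Rightarrow> complex" where
  "D1 z = fst z * (snd (snd z) + 1) - (fst (snd z) - 1) * (fst (snd z) - 1)"
definition phi1 :: "complex \<times> complex \<times> complex \<Rightarrow> complex \<times> complex \<times> complex" where
  "phi1 z = ((-(fst z + 1) * (snd (snd z) + 1) + (1 - fst (snd z)) * (1 - fst (snd z))) / D1 z,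
             (fst (snd z) - 1) / D1 z, - fst z / D1 z)"
definition T1 :: "(int^2^2) \<times> (int^2^2) \<times> (int^2^2) \<times> (int^2^2)" where
  "T1 = (mat2 (-1) 0 0 0, mat2 (-1) 1 0 (-1), mat2 1 0 0 1, mat2 0 (-1) (-1) 1)"

lemma T1_Sp: "T1 \<in> Sp4Z"
  unfolding T1_def Sp4Z_def
  by (simp add: mat2_transpose mat2_mult mat2_minus mat2_one mat2_uminus mat2_zero mat2_eq_iff)

lemma T1_act: assumes "D1 z \<noteq> 0" shows "sp_act T1 (sym_of z) = sym_of (phi1 z)"
proof -
  obtain z1 z2 z3 where z: "z = (z1, z2, z3)" by (cases z) auto
  define D where "D = D1 z"
  have d: "D \<noteq> 0" using assms D_def by simp
  have M: "cmat_of_int (mat2 1 0 0 1) ** sym_of z + cmat_of_int (mat2 0 (-1) (-1) 1) = mat2 z1 (z2 - 1) (z2 - 1) (z3 + 1)"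
    by (simp add: z sym_of_def cmat_mat2 mat2_mult mat2_add mat2_eq_iff)
  have d': "z1 * (z3 + 1) - (z2 - 1) * (z2 - 1) = D" unfolding D_def D1_def z by simp
  show ?thesis
    unfolding sp_act_def T1_def prod.case M matrix_inv_mat2'[OF d' d] phi1_def D_def[symmetric]
    using d by (simp add: z sym_of_def cmat_mat2 mat2_mult mat2_add mat2_eq_iff; simp add: field_simps; simp add: algebra_simps)
qed

lemma V1_open: "open {z. D1 z \<noteq> 0}"
  using open_Collect_neq[of "D1" "\<lambda>_. 0"] unfolding D1_def
  by (simp add: continuous_intros)

definition K1 :: "complex \<times> complex \<times> complex \<Rightarrow> complex \<times> complex \<times> complex" where
  "K1 h = (let h1 = fst h; h2 = fst (snd h); h3 = snd (snd h); a = fst B1 in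
     ((1/4 + a) * h1 + (1 + a) * h2 + 1/4 * h3,
      (1/2 + a/2) * h1 - 1/2 * h2 + (a/2) * h3,
      1/4 * h1 + a * h2 + (-3/4 - a) * h3))"

lemma s2: "(\<i> / complex_of_real (sqrt 2)) * (\<i> / complex_of_real (sqrt 2)) = -1/2"
proof -
  have s: "complex_of_real (sqrt 2) * complex_of_real (sqrt 2) = 2"
    by (simp add: of_real_mult[symmetric] del: of_real_mult)
  have "(\<i> / complex_of_real (sqrt 2)) * (\<i> / complex_of_real (sqrt 2)) = (\<i> * \<i>) / (complex_of_real (sqrt 2) * complex_of_real (sqrt 2))"
    by (simp only: times_divide_times_eq)
  also have "\<dots> = -1/2" unfolding s by simp
  finally show ?thesis .
qed

lemma rel1_aux: "(x::complex) * x = -1/2 \<Longrightarrow> (x - 1/2) * (x - 1/2) + (x - 1/2) + 3/4 = 0"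
  by algebra

lemma B1_eq: "B1 = (fst B1, 1/2, fst B1)" unfolding B1_def by simp

lemma rel1: "fst B1 * fst B1 + fst B1 + 3/4 = 0"
  using rel1_aux[OF s2] unfolding B1_def by simp

lemma D1_B1: "D1 B1 = -1"
proof -
  define a where "a = fst B1"
  have B: "B1 = (a, 1/2, a)" using B1_eq a_def by simp
  have r: "a * a + a + 3/4 = 0" using rel1 a_def by simp
  have "D1 B1 = a * a + a - 1/4"
    unfolding B by (simp add: D1_def algebra_simps)
  then show ?thesis using r by algebra
qed

lemma phi1_fix: "phi1 B1 = B1"
proof -
  define a where "a = fst B1"
  have B: "B1 = (a, 1/2, a)" using B1_eq a_def by simp
  have r: "a * a + a + 3/4 = 0" using rel1 a_def by simp
  have "phi1 B1 = (-(-(a + 1) * (a + 1) + 1/4), 1/2, a)"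
    unfolding phi1_def D1_B1 unfolding B by simp
  also have "\<dots> = B1" unfolding B using r by (simp, algebra)
  finally show ?thesis .
qed

lemma phi1_der: "(phi1 has_derivative K1) (at B1)"
proof -
  define a where "a = fst B1"
  have B: "B1 = (a, 1/2, a)" using B1_eq a_def by simp
  have r: "a * a + a + 3/4 = 0" using rel1 a_def by simp
  have r4: "4 * (a * a) + 4 * a + 3 = 0" using r by algebra
  have Dv: "fst B1 * (snd (snd B1) + 1) - (fst (snd B1) - 1) * (fst (snd B1) - 1) = -1"
    using D1_B1 by (simp add: D1_def)
  have a: "fst B1 * (snd (snd B1) + 1) \<noteq> (fst (snd B1) - 1) * (fst (snd B1) - 1)"
  proof
    assume "fst B1 * (snd (snd B1) + 1) = (fst (snd B1) - 1) * (fst (snd B1) - 1)"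
    then have "fst B1 * (snd (snd B1) + 1) - (fst (snd B1) - 1) * (fst (snd B1) - 1) = 0" by simp
    with Dv show False by simp
  qed
  show ?thesis
  unfolding phi1_def D1_def
  apply (rule has_derivative_eq_rhs)
   apply (rule derivative_intros | simp add: a)+
  unfolding Dv
  apply (rule ext)
  unfolding K1_def Let_def a_def[symmetric]
  unfolding B
  apply (simp add: prod_eq_iff)
  apply (insert r4)
  by (intro conjI; simp add: field_simps; algebra)
qed

lemma K1_surj: fixes v :: "complex \<times> complex \<times> complex" shows "\<exists>w. K1 w - w = v"
proof -
  obtain v1 v2 v3 :: complex where v: "v = (v1, v2, v3)" by (cases v) auto
  define a where "a = fst B1"
  have r: "a * a + a + 3/4 = 0" using rel1 a_def by simp
  have r4: "4 * (a * a) + 4 * a + 3 = 0" using r by algebra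
  define w :: "complex \<times> complex \<times> complex" where
    "w = ((-3/4 - a/2) * v1 + (-1/4 - a/2) * v2,
          (-1/8 - a/4) * v1 - 1/2 * v2 + (-1/8 - a/4) * v3,
          (-1/4 - a/2) * v2 + (-1/4 + a/2) * v3)"
  have "K1 w - w = v" unfolding v w_def K1_def Let_def a_def[symmetric]
    apply (simp add: prod_eq_iff)
    using r4 by (intro conjI; simp add: field_simps; algebra)
  then show ?thesis by blast
qed

lemma result1:
  fixes F :: "complex^2^2 \<Rightarrow> real"
  assumes inv: "\<And>T Z. T \<in> Sp4Z \<Longrightarrow> Z \<in> siegel_H2 \<Longrightarrow> F (sp_act T Z) = F Z"
    and c1: "C1_near F B1"
  shows "((F \<circ> sym_of) has_derivative (\<lambda>_. 0)) (at B1)"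
proof (rule key[OF inv c1 T1_Sp V1_open, where \<phi>=phi1 and K=K1])
  show "B1 \<in> {z. D1 z \<noteq> 0}" using D1_B1 by simp
  show "\<And>z. z \<in> {z. D1 z \<noteq> 0} \<Longrightarrow> sp_act T1 (sym_of z) = sym_of (phi1 z)" using T1_act by simp
  show "phi1 B1 = B1" by (rule phi1_fix)
  show "(phi1 has_derivative K1) (at B1)" by (rule phi1_der)
  show "\<And>v. \<exists>w. K1 w - w = v" by (rule K1_surj)
qed


definition D3 :: "complex \<times> complex \<times> complex \<Rightarrow> complex" where
  "D3 z = fst z"
definition phi3 :: "complex \<times> complex \<times> complex \<Rightarrow> complex \<times> complex \<times> complex" where
  "phi3 z = ((fst z * snd (snd z) - fst (snd z) * fst (snd z)) / D3 z, 1 - fst (snd z) / D3 z, 1 - 1 / D3 z)"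
definition T3 :: "(int^2^2) \<times> (int^2^2) \<times> (int^2^2) \<times> (int^2^2)" where
  "T3 = (mat2 (-1) 1 (-1) 0, mat2 0 0 1 1, mat2 0 0 (-1) 0, mat2 0 1 0 0)"

lemma T3_Sp: "T3 \<in> Sp4Z"
  unfolding T3_def Sp4Z_def
  by (simp add: mat2_transpose mat2_mult mat2_minus mat2_one mat2_uminus mat2_zero mat2_eq_iff)

lemma T3_act: assumes "D3 z \<noteq> 0" shows "sp_act T3 (sym_of z) = sym_of (phi3 z)"
proof -
  obtain z1 z2 z3 where z: "z = (z1, z2, z3)" by (cases z) auto
  define D where "D = D3 z"
  have d: "D \<noteq> 0" using assms D_def by simp
  have M: "cmat_of_int (mat2 0 0 (-1) 0) ** sym_of z + cmat_of_int (mat2 0 1 0 0) = mat2 0 1 (- z1) (- z2)"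
    by (simp add: z sym_of_def cmat_mat2 mat2_mult mat2_add mat2_eq_iff)
  have d': "0 * (- z2) - 1 * (- z1) = D" unfolding D_def D3_def z by simp
  show ?thesis
    unfolding sp_act_def T3_def prod.case M matrix_inv_mat2'[OF d' d] phi3_def D_def[symmetric]
    using d by (simp add: z sym_of_def cmat_mat2 mat2_mult mat2_add mat2_eq_iff D_def D3_def; simp add: field_simps; simp add: algebra_simps)
qed

lemma V3_open: "open {z. D3 z \<noteq> 0}"
  using open_Collect_neq[of "D3" "\<lambda>_. 0"] unfolding D3_def
  by (simp add: continuous_intros)

lemma eps5_pow: "eps5 ^ 5 = 1"
  unfolding eps5_def Complex.DeMoivre by simp

lemma eps5_ne1: "eps5 \<noteq> 1"
proof
  assume "eps5 = 1"
  then have "Im eps5 = 0" by simp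
  moreover have "Im eps5 > 0" unfolding eps5_def by (simp add: sin_gt_zero)
  ultimately show False by simp
qed

lemma eps5_cyc: "1 + eps5 + eps5^2 + eps5^3 + eps5^4 = 0"
proof -
  have "(eps5 - 1) * (1 + eps5 + eps5^2 + eps5^3 + eps5^4) = eps5^5 - 1" by algebra
  then have "(eps5 - 1) * (1 + eps5 + eps5^2 + eps5^3 + eps5^4) = 0" using eps5_pow by simp
  then show ?thesis using eps5_ne1 by simp
qed

lemma eps5_ne0: "eps5 \<noteq> 0" using eps5_pow by auto

lemma eps5_ne_m1: "1 + eps5 \<noteq> 0"
proof
  assume "1 + eps5 = 0"
  then have "eps5 = -1" by algebra
  then show False using eps5_pow by algebra
qed

lemma B3_eq: "B3 = (eps5, 1 + eps5 + eps5^3, 1 - eps5^4)"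
proof -
  have "eps5 / (1 + eps5) = 1 + eps5 + eps5^3"
    using eps5_ne_m1 eps5_cyc by (simp add: field_simps; algebra)
  then show ?thesis unfolding B3_def by simp
qed

definition K3 :: "complex \<times> complex \<times> complex \<Rightarrow> complex \<times> complex \<times> complex" where
  "K3 h = (let h1 = fst h; h2 = fst (snd h); h3 = snd (snd h); e = fst B3 in
     ((-2 - e - e^2 - 2*e^3) * h1 + (2*e + 2*e^3) * h2 + h3,
      (-1 - e^2) * h1 + (1 + e + e^2 + e^3) * h2,
      e^3 * h1))"

lemma phi3_fix: "phi3 B3 = B3"
  unfolding phi3_def D3_def B3_eq using eps5_ne0 eps5_cyc
  by (simp add: prod_eq_iff; intro conjI; simp add: field_simps; algebra)

lemma phi3_der: "(phi3 has_derivative K3) (at B3)"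
proof -
  have a: "fst B3 \<noteq> 0" unfolding B3_eq using eps5_ne0 by simp
  have e: "fst B3 = eps5" unfolding B3_eq by simp
  show ?thesis
  unfolding phi3_def D3_def
  apply (rule has_derivative_eq_rhs)
   apply (rule derivative_intros | simp add: a)+
  apply (rule ext)
  unfolding K3_def Let_def e
  unfolding B3_eq
  apply (simp add: prod_eq_iff)
  apply (insert eps5_cyc eps5_ne0)
  by (intro conjI; simp add: field_simps; algebra)
qed

lemma K3_surj: fixes v :: "complex \<times> complex \<times> complex" shows "\<exists>w. K3 w - w = v"
proof -
  obtain v1 v2 v3 :: complex where v: "v = (v1, v2, v3)" by (cases v) auto
  define e where "e = eps5"
  have r: "1 + e + e^2 + e^3 + e^4 = 0" using eps5_cyc e_def by simp
  have fe: "fst B3 = e" unfolding B3_eq e_def by simp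
  define w :: "complex \<times> complex \<times> complex" where
    "w = ((e + 2*e^2 + 2*e^3) / 5 * v1 + (-2 - 2*e - 2*e^2 - 4*e^3) / 5 * v2 + (e + 2*e^2 + 2*e^3) / 5 * v3,
          (e^2 - e^3) / 5 * v1 + (-3 - e - 2*e^2 + e^3) / 5 * v2 + (e^2 - e^3) / 5 * v3,
          (1 + e - e^2 - e^3) / 5 * v1 + (-2*e + 2*e^2) / 5 * v2 + (-4 + e - e^2 - e^3) / 5 * v3)"
  have "K3 w - w = v" unfolding v w_def K3_def Let_def fe
    apply (simp add: prod_eq_iff)
    using r by (intro conjI; simp add: field_simps; algebra)
  then show ?thesis by blast
qed

lemma result3:
  fixes F :: "complex^2^2 \<Rightarrow> real"
  assumes inv: "\<And>T Z. T \<in> Sp4Z \<Longrightarrow> Z \<in> siegel_H2 \<Longrightarrow> F (sp_act T Z) = F Z"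
    and c1: "C1_near F B3"
  shows "((F \<circ> sym_of) has_derivative (\<lambda>_. 0)) (at B3)"
proof (rule key[OF inv c1 T3_Sp V3_open, where \<phi>=phi3 and K=K3])
  show "B3 \<in> {z. D3 z \<noteq> 0}" unfolding B3_eq using eps5_ne0 by (simp add: D3_def)
  show "\<And>z. z \<in> {z. D3 z \<noteq> 0} \<Longrightarrow> sp_act T3 (sym_of z) = sym_of (phi3 z)" using T3_act by simp
  show "phi3 B3 = B3" by (rule phi3_fix)
  show "(phi3 has_derivative K3) (at B3)" by (rule phi3_der)
  show "\<And>v. \<exists>w. K3 w - w = v" by (rule K3_surj)
qed

theorem theorem5:
  fixes F :: "complex^2^2 \<Rightarrow> real"
  assumes inv: "\<And>T Z. T \<in> Sp4Z \<Longrightarrow> Z \<in> siegel_H2 \<Longrightarrow> F (sp_act T Z) = F Z"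
    and c1: "C1_near F B1" "C1_near F B2" "C1_near F B3"
  shows "((F \<circ> sym_of) has_derivative (\<lambda>_. 0)) (at B1) \<and>
         ((F \<circ> sym_of) has_derivative (\<lambda>_. 0)) (at B2) \<and>
         ((F \<circ> sym_of) has_derivative (\<lambda>_. 0)) (at B3)"
    using result1[OF inv c1(1)] result2[OF inv c1(2)] result3[OF inv c1(3)] by blast

end
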